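(* Let $N\ge2$ and let $H\in M_{(N-1)\times N}(\mathbb T)$ be partial Hadamard, with rows $R_1,\ldots,R_{N-1}\in\mathbb T^N$ and columns $C_1,\ldots,C_N\in\mathbb T^{N-1}$. Let $Z\in\mathbb C^N$ be a nonzero vector with $\mathrm{span}(R_1,\ldots,R_{N-1})^\perp=\mathbb CZ$. The following are equivalent: (1) the submagic matrix $(P_{ij})_{i,j=1}^{N-1}$, $P_{ij}=\mathrm{Proj}(R_i/R_j)\in M_N(\mathbb C)$, can be completed to an $N\times N$ magic matrix with entries in $M_N(\mathbb C)$; (2) with $G\in M_N(\mathbb C)$, $G_{kl}=\frac1N|\langle C_k,C_l\rangle|^2$, the matrix $G-(N-2)1_N$ is a projection; (3) $HDH^*=c\,1_{N-1}$ for some scalar $c$, where $D=\mathrm{diag}(|Z_1|^2,\ldots,|Z_N|^2)$.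
   Context: $\mathbb T$ is the unit circle; a partial Hadamard matrix has entries in $\mathbb T$ and pairwise orthogonal rows. $R_i/R_j$ is entrywise division; $\mathrm{Proj}(\xi)$ is the orthogonal projection onto $\mathbb C\xi$; $\langle x,y\rangle=\sum_l x_l\overline{y_l}$. A submagic matrix is a square matrix of orthogonal projections, pairwise orthogonal within each row and each column; it is magic if moreover each row and each column sums to $1$; a completion is a magic matrix whose upper-left $(N-1)\times(N-1)$ block is the given one. *)

theory Defs
  imports "Jordan_Normal_Form.Schur_Decomposition"
begin

text \<open>Matrices are Jordan_Normal_Form matrices over complex. Inner product
  (u \<bullet>c v) = sum_l u_l * cnj v_l. Indices start at 0.\<close>

definition partial_hadamard :: "nat \<Rightarrow> nat \<Rightarrow> complex mat \<Rightarrow> bool" where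
  "partial_hadamard m n H \<longleftrightarrow> H \<in> carrier_mat m n \<and>
     (\<forall>i<m. \<forall>j<n. cmod (H $$ (i,j)) = 1) \<and>
     (\<forall>i<m. \<forall>k<m. i \<noteq> k \<longrightarrow> row H i \<bullet>c row H k = 0)"

definition is_projection :: "nat \<Rightarrow> complex mat \<Rightarrow> bool" where
  "is_projection d P \<longleftrightarrow> P \<in> carrier_mat d d \<and> P * P = P \<and> mat_adjoint P = P"

definition Proj :: "complex vec \<Rightarrow> complex mat" where
  "Proj xi = mat (dim_vec xi) (dim_vec xi) (\<lambda>(a,b). xi $ a * cnj (xi $ b) / (xi \<bullet>c xi))"

definition vec_div :: "complex vec \<Rightarrow> complex vec \<Rightarrow> complex vec" where
  "vec_div u v = vec (dim_vec u) (\<lambda>l. u $ l / v $ l)"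

definition mat_sum :: "nat \<Rightarrow> ('i \<Rightarrow> complex mat) \<Rightarrow> 'i set \<Rightarrow> complex mat" where
  "mat_sum d F I = mat d d (\<lambda>ab. \<Sum>i\<in>I. F i $$ ab)"

definition submagic :: "nat \<Rightarrow> nat \<Rightarrow> (nat \<Rightarrow> nat \<Rightarrow> complex mat) \<Rightarrow> bool" where
  "submagic m d Q \<longleftrightarrow>
     (\<forall>i<m. \<forall>j<m. is_projection d (Q i j)) \<and>
     (\<forall>i<m. \<forall>j<m. \<forall>k<m. j \<noteq> k \<longrightarrow> Q i j * Q i k = 0\<^sub>m d d) \<and>
     (\<forall>j<m. \<forall>i<m. \<forall>k<m. i \<noteq> k \<longrightarrow> Q i j * Q k j = 0\<^sub>m d d)"

definition magic :: "nat \<Rightarrow> nat \<Rightarrow> (nat \<Rightarrow> nat \<Rightarrow> complex mat) \<Rightarrow> bool" where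
  "magic m d Q \<longleftrightarrow> submagic m d Q \<and>
     (\<forall>i<m. mat_sum d (\<lambda>j. Q i j) {..<m} = 1\<^sub>m d) \<and>
     (\<forall>j<m. mat_sum d (\<lambda>i. Q i j) {..<m} = 1\<^sub>m d)"

definition has_magic_completion :: "nat \<Rightarrow> nat \<Rightarrow> (nat \<Rightarrow> nat \<Rightarrow> complex mat) \<Rightarrow> bool" where
  "has_magic_completion m d P \<longleftrightarrow>
     (\<exists>Q. magic m d Q \<and> (\<forall>i<m-1. \<forall>j<m-1. Q i j = P i j))"

end

theory Submission
  imports Defs
begin

lemma adj_index[simp]:
  assumes "A \<in> carrier_mat m n" "i < n" "j < m"
  shows "mat_adjoint A $$ (i,j) = cnj (A $$ (j,i))"
  using assms unfolding mat_adjoint_def by (auto simp: mat_of_rows_def cols_def)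

lemma adj_carrier[simp]:
  assumes "A \<in> carrier_mat m n"
  shows "mat_adjoint A \<in> carrier_mat n m"
  using assms unfolding mat_adjoint_def by (auto simp: mat_of_rows_def cols_def)

lemma adj_dims[simp]: "dim_row (mat_adjoint A) = dim_col A" "dim_col (mat_adjoint A) = dim_row A"
  unfolding mat_adjoint_def by (auto simp: mat_of_rows_def cols_def)

lemma unit_cnj: "cmod z = 1 \<Longrightarrow> z * cnj z = 1"
  by (metis complex_norm_square mult.commute of_real_1 power_one)

lemma unit_cnj': "cmod z = 1 \<Longrightarrow> cnj z * z = 1"
  using unit_cnj by (simp add: mult.commute)

lemma unit_inv: "cmod z = 1 \<Longrightarrow> 1 / z = cnj z"
  by (metis divide_eq_eq mult.commute norm_zero unit_cnj zero_neq_one)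

lemma mat_mult_entry:
  "a < n \<Longrightarrow> b < n \<Longrightarrow> (mat n n F * mat n n G) $$ (a,b) = (\<Sum>c<n. F (a,c) * G (c,b))"
  by (simp add: scalar_prod_def atLeast0LessThan)

lemma Proj_hadamard:
  fixes M :: "complex mat"
  assumes M: "M \<in> carrier_mat N N"
  and unit: "\<And>i j. i<N \<Longrightarrow> j<N \<Longrightarrow> cmod (M$$(i,j)) = 1"
  and ij: "i < N" "j < N"
  shows "Proj (vec_div (row M i) (row M j)) = mat N N (\<lambda>(a,b).
     M$$(i,a) * cnj (M$$(j,a)) * cnj (M$$(i,b)) * M$$(j,b) / of_nat N)"
proof -
  let ?v = "vec_div (row M i) (row M j)"
  have dv: "dim_vec ?v = N" using M by (simp add: vec_div_def)
  have ve: "?v $ a = M$$(i,a) * cnj (M$$(j,a))" if "a < N" for a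
  proof -
    have "?v $ a = M$$(i,a) * (1 / M$$(j,a))" using M that ij by (simp add: vec_div_def)
    then show ?thesis using unit_inv[OF unit[OF ij(2) that]] by simp
  qed
  have term1: "?v $ l * cnj (?v $ l) = 1" if "l < N" for l
  proof -
    have "?v $ l * cnj (?v $ l) = (M$$(i,l) * cnj (M$$(i,l))) * (cnj (M$$(j,l)) * M$$(j,l))"
      using that by (simp add: ve ac_simps)
    also have "\<dots> = 1" using unit_cnj[OF unit[OF ij(1) that]] unit_cnj'[OF unit[OF ij(2) that]] by simp
    finally show ?thesis .
  qed
  have "?v \<bullet>c ?v = (\<Sum>l<N. ?v $ l * cnj (?v $ l))"
    unfolding scalar_prod_def using dv by (simp add: atLeast0LessThan)
  also have "\<dots> = (\<Sum>l<N. 1)" using term1 by (intro sum.cong) auto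
  finally have nn: "?v \<bullet>c ?v = of_nat N" by simp
  show ?thesis
    unfolding Proj_def nn dv
    by (rule eq_matI) (auto simp: ve)
qed

context
  fixes M :: "complex mat" and N :: nat
  assumes M: "M \<in> carrier_mat N N" and Npos: "N > 0"
  and unit: "\<And>i j. i<N \<Longrightarrow> j<N \<Longrightarrow> cmod (M$$(i,j)) = 1"
  and rws: "\<And>j k. j<N \<Longrightarrow> k<N \<Longrightarrow> (\<Sum>c<N. M$$(j,c) * cnj (M$$(k,c))) = (if j=k then of_nat N else 0)"
  and cls: "\<And>a b. a<N \<Longrightarrow> b<N \<Longrightarrow> (\<Sum>i<N. cnj (M$$(i,a)) * M$$(i,b)) = (if a=b then of_nat N else 0)"
begin

definition "F i j = (\<lambda>(a,b). M$$(i,a) * cnj (M$$(j,a)) * cnj (M$$(i,b)) * M$$(j,b) / of_nat N)"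

lemma Nz: "(of_nat N :: complex) \<noteq> 0" using Npos by simp

lemma uc: "i<N \<Longrightarrow> j<N \<Longrightarrow> M$$(i,j) * cnj (M$$(i,j)) = 1"
  using unit unit_cnj by blast
lemma uc': "i<N \<Longrightarrow> j<N \<Longrightarrow> cnj (M$$(i,j)) * M$$(i,j) = 1"
  using unit unit_cnj' by blast

lemma F_sq: assumes "i<N" "j<N" shows "mat N N (F i j) * mat N N (F i j) = mat N N (F i j)"
proof (rule eq_matI)
  fix a b assume ab: "a < dim_row (mat N N (F i j))" "b < dim_col (mat N N (F i j))"
  then have a: "a<N" and b: "b<N" by auto
  let ?K = "M$$(i,a) * cnj (M$$(j,a)) * cnj (M$$(i,b)) * M$$(j,b)"
  have t: "F i j (a,c) * F i j (c,b) = ?K / (of_nat N * of_nat N) *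
     ((M$$(i,c) * cnj (M$$(i,c))) * (cnj (M$$(j,c)) * M$$(j,c)))" for c
    unfolding F_def by (simp add: field_simps)
  have t1: "F i j (a,c) * F i j (c,b) = ?K / (of_nat N * of_nat N)" if "c<N" for c
    unfolding t using uc[OF assms(1) that] uc'[OF assms(2) that] by simp
  have "(mat N N (F i j) * mat N N (F i j)) $$ (a,b) = (\<Sum>c<N. F i j (a,c) * F i j (c,b))"
    using a b by (rule mat_mult_entry)
  also have "\<dots> = (\<Sum>c<N. ?K / (of_nat N * of_nat N))" using t1 by (intro sum.cong) auto
  also have "\<dots> = ?K / of_nat N" using Nz by (simp add: field_simps)
  also have "\<dots> = mat N N (F i j) $$ (a,b)" using a b by (simp add: F_def)
  finally show "(mat N N (F i j) * mat N N (F i j)) $$ (a,b) = mat N N (F i j) $$ (a,b)" .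
qed auto

lemma F_adj: assumes "i<N" "j<N" shows "mat_adjoint (mat N N (F i j)) = mat N N (F i j)"
proof (rule eq_matI)
  fix a b assume "a < dim_row (mat N N (F i j))" "b < dim_col (mat N N (F i j))"
  then have a: "a<N" and b: "b<N" by auto
  have "mat_adjoint (mat N N (F i j)) $$ (a,b) = cnj (F i j (b,a))"
    using adj_index[OF mat_carrier a b] a b by simp
  also have "\<dots> = F i j (a,b)" unfolding F_def by (simp add: ac_simps)
  finally show "mat_adjoint (mat N N (F i j)) $$ (a,b) = mat N N (F i j) $$ (a,b)" using a b by simp
qed auto

lemma F_row_orth: assumes "i<N" "j<N" "k<N" "j \<noteq> k"
  shows "mat N N (F i j) * mat N N (F i k) = 0\<^sub>m N N"
proof (rule eq_matI)
  fix a b assume ab: "a < dim_row (0\<^sub>m N N :: complex mat)" "b < dim_col (0\<^sub>m N N :: complex mat)"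
  then have a: "a<N" and b: "b<N" by auto
  let ?K = "M$$(i,a) * cnj (M$$(j,a)) * cnj (M$$(i,b)) * M$$(k,b)"
  have t: "F i j (a,c) * F i k (c,b) = ?K / (of_nat N * of_nat N) *
     ((M$$(i,c) * cnj (M$$(i,c))) * (M$$(j,c) * cnj (M$$(k,c))))" for c
    unfolding F_def by (simp add: field_simps)
  have t1: "F i j (a,c) * F i k (c,b) = ?K / (of_nat N * of_nat N) * (M$$(j,c) * cnj (M$$(k,c)))" if "c<N" for c
    unfolding t using uc[OF assms(1) that] by simp
  have "(mat N N (F i j) * mat N N (F i k)) $$ (a,b) = (\<Sum>c<N. F i j (a,c) * F i k (c,b))"
    using a b by (rule mat_mult_entry)
  also have "\<dots> = (\<Sum>c<N. ?K / (of_nat N * of_nat N) * (M$$(j,c) * cnj (M$$(k,c))))" using t1 by (intro sum.cong) auto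
  also have "\<dots> = ?K / (of_nat N * of_nat N) * (\<Sum>c<N. M$$(j,c) * cnj (M$$(k,c)))"
    by (simp add: sum_distrib_left)
  also have "\<dots> = 0" using rws[OF assms(2,3)] assms(4) by simp
  finally show "(mat N N (F i j) * mat N N (F i k)) $$ (a,b) = 0\<^sub>m N N $$ (a,b)" using a b by simp
qed auto

lemma F_col_orth: assumes "i<N" "j<N" "k<N" "i \<noteq> k"
  shows "mat N N (F i j) * mat N N (F k j) = 0\<^sub>m N N"
proof (rule eq_matI)
  fix a b assume ab: "a < dim_row (0\<^sub>m N N :: complex mat)" "b < dim_col (0\<^sub>m N N :: complex mat)"
  then have a: "a<N" and b: "b<N" by auto
  let ?K = "M$$(i,a) * cnj (M$$(j,a)) * cnj (M$$(k,b)) * M$$(j,b)"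
  have t: "F i j (a,c) * F k j (c,b) = ?K / (of_nat N * of_nat N) *
     ((M$$(j,c) * cnj (M$$(j,c))) * (M$$(k,c) * cnj (M$$(i,c))))" for c
    unfolding F_def by (simp add: field_simps)
  have t1: "F i j (a,c) * F k j (c,b) = ?K / (of_nat N * of_nat N) * (M$$(k,c) * cnj (M$$(i,c)))" if "c<N" for c
    unfolding t using uc[OF assms(2) that] by simp
  have "(mat N N (F i j) * mat N N (F k j)) $$ (a,b) = (\<Sum>c<N. F i j (a,c) * F k j (c,b))"
    using a b by (rule mat_mult_entry)
  also have "\<dots> = (\<Sum>c<N. ?K / (of_nat N * of_nat N) * (M$$(k,c) * cnj (M$$(i,c))))" using t1 by (intro sum.cong) auto
  also have "\<dots> = ?K / (of_nat N * of_nat N) * (\<Sum>c<N. M$$(k,c) * cnj (M$$(i,c)))"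
    by (simp add: sum_distrib_left)
  also have "\<dots> = 0" using rws[OF assms(3,1)] assms(4) by simp
  finally show "(mat N N (F i j) * mat N N (F k j)) $$ (a,b) = 0\<^sub>m N N $$ (a,b)" using a b by simp
qed auto

lemma F_row_sum: assumes "i<N" "a<N" "b<N"
  shows "(\<Sum>j<N. F i j (a,b)) = 1\<^sub>m N $$ (a,b)"
proof -
  have "(\<Sum>j<N. F i j (a,b)) = (\<Sum>j<N. M$$(i,a) * cnj (M$$(i,b)) / of_nat N * (cnj (M$$(j,a)) * M$$(j,b)))"
    unfolding F_def by (intro sum.cong) (auto simp: field_simps)
  also have "\<dots> = M$$(i,a) * cnj (M$$(i,b)) / of_nat N * (\<Sum>j<N. cnj (M$$(j,a)) * M$$(j,b))"
    by (simp add: sum_distrib_left)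
  also have "\<dots> = 1\<^sub>m N $$ (a,b)"
    using cls[OF assms(2,3)] assms uc[OF assms(1,2)] Nz by auto
  finally show ?thesis .
qed

lemma F_col_sum: assumes "j<N" "a<N" "b<N"
  shows "(\<Sum>i<N. F i j (a,b)) = 1\<^sub>m N $$ (a,b)"
proof -
  have "(\<Sum>i<N. F i j (a,b)) = (\<Sum>i<N. cnj (M$$(j,a)) * M$$(j,b) / of_nat N * cnj (cnj (M$$(i,a)) * M$$(i,b)))"
    unfolding F_def by (intro sum.cong) (auto simp: field_simps)
  also have "\<dots> = cnj (M$$(j,a)) * M$$(j,b) / of_nat N * cnj (\<Sum>i<N. cnj (M$$(i,a)) * M$$(i,b))"
    by (simp add: sum_distrib_left cnj_sum)
  also have "\<dots> = 1\<^sub>m N $$ (a,b)"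
    using cls[OF assms(2,3)] assms uc'[OF assms(1,2)] Nz by auto
  finally show ?thesis .
qed

lemma hadamard_magic: "magic N N (\<lambda>i j. Proj (vec_div (row M i) (row M j)))"
proof -
  have Q: "Proj (vec_div (row M i) (row M j)) = mat N N (F i j)" if "i<N" "j<N" for i j
    unfolding F_def using Proj_hadamard[OF M unit that] by simp
  show ?thesis
    unfolding magic_def submagic_def is_projection_def
    using F_sq F_adj F_row_orth F_col_orth
    by (auto simp: Q mat_sum_def F_row_sum F_col_sum intro!: eq_matI)
qed

end

theorem proposition3p7:
  fixes N :: nat and H :: "complex mat" and Z :: "complex vec"
  assumes "N \<ge> 2"
    and "partial_hadamard (N - 1) N H"
    and "Z \<in> carrier_vec N" and "Z \<noteq> 0\<^sub>v N"
    and "\<forall>v \<in> carrier_vec N.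
           (\<forall>i<N-1. v \<bullet>c row H i = 0) \<longleftrightarrow> (\<exists>a::complex. v = a \<cdot>\<^sub>v Z)"
  defines "P \<equiv> (\<lambda>i j. Proj (vec_div (row H i) (row H j)))"
    and "G \<equiv> mat N N (\<lambda>(k,l). complex_of_real ((cmod (col H k \<bullet>c col H l))\<^sup>2 / real N))"
    and "D \<equiv> mat N N (\<lambda>(a,b). if a = b then complex_of_real ((cmod (Z $ a))\<^sup>2) else 0)"
  shows "(has_magic_completion N N P
            \<longleftrightarrow> is_projection N (G - of_nat (N - 2) \<cdot>\<^sub>m 1\<^sub>m N))
       \<and> (is_projection N (G - of_nat (N - 2) \<cdot>\<^sub>m 1\<^sub>m N)
            \<longleftrightarrow> (\<exists>c::complex. H * D * mat_adjoint H = c \<cdot>\<^sub>m 1\<^sub>m (N - 1)))"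
proof -
  define n where "n = N - 1"
  have Nn: "N = Suc n" using assms(1) unfolding n_def by simp
  have Npos: "N > 0" using Nn by simp
  have Hc: "H \<in> carrier_mat n N" and Hu: "\<And>i j. i<n \<Longrightarrow> j<N \<Longrightarrow> cmod (H$$(i,j)) = 1"
    and Ho: "\<And>i k. i<n \<Longrightarrow> k<n \<Longrightarrow> i\<noteq>k \<Longrightarrow> row H i \<bullet>c row H k = 0"
    using assms(2) unfolding partial_hadamard_def n_def by auto
  have Hd: "dim_row H = n" "dim_col H = N" using Hc by auto
  have Zc: "Z \<in> carrier_vec N" by fact
  have Zd: "dim_vec Z = N" using Zc by auto
  have rowsum: "row H i \<bullet>c row H k = (\<Sum>l<N. H$$(i,l) * cnj (H$$(k,l)))" if "i<n" "k<n" for i k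
    using that by (simp add: scalar_prod_def atLeast0LessThan Hd)
  have Zo: "(\<Sum>l<N. Z$l * cnj (H$$(i,l))) = 0" if i: "i<n" for i
  proof -
    have "Z = 1 \<cdot>\<^sub>v Z" by simp
    then have "Z \<bullet>c row H i = 0" using assms(5) Zc i unfolding n_def by blast
    then show ?thesis using i by (simp add: scalar_prod_def atLeast0LessThan Hd Zd)
  qed
  have Hr: "(\<Sum>l<N. H$$(i,l) * cnj (H$$(k,l))) = (if i=k then of_nat N else 0)" if "i<n" "k<n" for i k
  proof (cases "i = k")
    case True
    have "(\<Sum>l<N. H$$(i,l) * cnj (H$$(k,l))) = (\<Sum>l<N. 1)"
      using True that Hu unit_cnj by (intro sum.cong) auto
    then show ?thesis using True by simp
  next
    case False
    then show ?thesis using Ho[OF that False] rowsum[OF that] by simp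
  qed
  define S where "S = (\<Sum>l<N. (cmod (Z$l))^2)"
  obtain l0 where l0: "l0 < N" "Z$l0 \<noteq> 0"
  proof -
    have "\<exists>l<N. Z$l \<noteq> 0"
    proof (rule ccontr)
      assume "\<not> ?thesis"
      then have "Z = 0\<^sub>v N" using Zc by (intro eq_vecI) auto
      then show False using assms(4) by simp
    qed
    then show ?thesis using that by blast
  qed
  have Spos: "S > 0"
  proof -
    have "(cmod (Z$l0))^2 \<le> S" unfolding S_def using l0 by (intro member_le_sum) auto
    moreover have "(cmod (Z$l0))^2 > 0" using l0 by simp
    ultimately show ?thesis by linarith
  qed
  have SZ: "(\<Sum>l<N. Z$l * cnj (Z$l)) = complex_of_real S"
    unfolding S_def of_real_sum by (intro sum.cong) (auto simp: complex_norm_square[symmetric] simp del: of_real_power)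
  define c0 where "c0 = complex_of_real (sqrt (real N / S))"
  have cc0: "c0 * cnj c0 = complex_of_real (real N / S)"
    unfolding c0_def using Spos by (simp flip: of_real_mult)
  define W where "W l = c0 * Z$l" for l
  define M where "M = mat N N (\<lambda>(i,j). if i < n then H$$(i,j) else W j)"
  have Mc: "M \<in> carrier_mat N N" unfolding M_def by simp
  have Me: "M$$(i,j) = (if i<n then H$$(i,j) else W j)" if "i<N" "j<N" for i j
    unfolding M_def using that by simp
  have rws: "(\<Sum>c<N. M$$(j,c) * cnj (M$$(k,c))) = (if j=k then of_nat N else 0)"
    if jk: "j<N" "k<N" for j k
  proof -
    consider "j<n" "k<n" | "j<n" "k=n" | "j=n" "k<n" | "j=n" "k=n" using jk Nn by linarith
    then show ?thesis
    proof cases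
      case 1 then show ?thesis using Hr[OF 1] Me jk by simp
    next
      case 2
      have "(\<Sum>c<N. M$$(j,c) * cnj (M$$(k,c))) = (\<Sum>c<N. cnj c0 * cnj (Z$c * cnj (H$$(j,c))))"
        using 2 jk by (intro sum.cong) (auto simp: Me W_def ac_simps)
      also have "\<dots> = cnj c0 * cnj (\<Sum>c<N. Z$c * cnj (H$$(j,c)))"
        by (simp add: sum_distrib_left cnj_sum)
      also have "\<dots> = 0" using Zo[OF 2(1)] by simp
      finally show ?thesis using 2 by simp
    next
      case 3
      have "(\<Sum>c<N. M$$(j,c) * cnj (M$$(k,c))) = (\<Sum>c<N. c0 * (Z$c * cnj (H$$(k,c))))"
        using 3 jk by (intro sum.cong) (auto simp: Me W_def ac_simps)
      also have "\<dots> = c0 * (\<Sum>c<N. Z$c * cnj (H$$(k,c)))"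
        by (simp add: sum_distrib_left)
      also have "\<dots> = 0" using Zo[OF 3(2)] by simp
      finally show ?thesis using 3 by simp
    next
      case 4
      have "(\<Sum>c<N. M$$(j,c) * cnj (M$$(k,c))) = (\<Sum>c<N. (c0 * cnj c0) * (Z$c * cnj (Z$c)))"
        using 4 jk by (intro sum.cong) (auto simp: Me W_def ac_simps)
      also have "\<dots> = (c0 * cnj c0) * (\<Sum>c<N. Z$c * cnj (Z$c))"
        by (simp add: sum_distrib_left)
      also have "\<dots> = of_nat N" unfolding SZ cc0 using Spos by (simp flip: of_real_mult)
      finally show ?thesis using 4 by simp
    qed
  qed
  have MM: "M * mat_adjoint M = of_nat N \<cdot>\<^sub>m 1\<^sub>m N"
  proof (rule eq_matI)
    fix j k assume "j < dim_row (of_nat N \<cdot>\<^sub>m 1\<^sub>m N :: complex mat)" "k < dim_col (of_nat N \<cdot>\<^sub>m 1\<^sub>m N :: complex mat)"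
    then have j: "j<N" and k: "k<N" by auto
    have "(M * mat_adjoint M) $$ (j,k) = (\<Sum>c<N. M$$(j,c) * cnj (M$$(k,c)))"
      using j k Mc by (simp add: scalar_prod_def atLeast0LessThan adj_index[OF Mc])
    then show "(M * mat_adjoint M) $$ (j,k) = (of_nat N \<cdot>\<^sub>m 1\<^sub>m N) $$ (j,k)"
      using rws[OF j k] j k by simp
  qed (use Mc in auto)
  have inv1: "((1 / of_nat N) \<cdot>\<^sub>m M) * mat_adjoint M = 1\<^sub>m N"
  proof -
    have "((1 / of_nat N) \<cdot>\<^sub>m M) * mat_adjoint M = (1 / of_nat N) \<cdot>\<^sub>m (M * mat_adjoint M)"
      using Mc by (simp add: mult_smult_assoc_mat[OF Mc adj_carrier[OF Mc]])
    also have "\<dots> = 1\<^sub>m N" unfolding MM using Npos by (intro eq_matI) auto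
    finally show ?thesis .
  qed
  have inv2: "mat_adjoint M * ((1 / of_nat N) \<cdot>\<^sub>m M) = 1\<^sub>m N"
    by (rule mat_mult_left_right_inverse[OF _ adj_carrier[OF Mc] inv1]) (use Mc in simp)
  have cls: "(\<Sum>i<N. cnj (M$$(i,a)) * M$$(i,b)) = (if a=b then of_nat N else 0)"
    if ab: "a<N" "b<N" for a b
  proof -
    have "(mat_adjoint M * ((1 / of_nat N) \<cdot>\<^sub>m M)) $$ (a,b) = (\<Sum>i<N. cnj (M$$(i,a)) * M$$(i,b)) / of_nat N"
      using ab Mc by (simp add: scalar_prod_def atLeast0LessThan adj_index[OF Mc] sum_divide_distrib)
    then have "(\<Sum>i<N. cnj (M$$(i,a)) * M$$(i,b)) / of_nat N = (if a=b then 1 else 0)"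
      unfolding inv2 using ab by simp
    then show ?thesis using Npos by (auto simp: field_simps split: if_splits)
  qed
  have clsplit: "(\<Sum>i<N. cnj (M$$(i,a)) * M$$(i,b)) = (\<Sum>i<n. cnj (H$$(i,a)) * H$$(i,b)) + cnj (W a) * W b"
    if ab: "a<N" "b<N" for a b
  proof -
    have "(\<Sum>i<n. cnj (M$$(i,a)) * M$$(i,b)) = (\<Sum>i<n. cnj (H$$(i,a)) * H$$(i,b))"
      using ab Nn by (intro sum.cong) (auto simp: Me)
    moreover have "cnj (M$$(n,a)) * M$$(n,b) = cnj (W a) * W b" using ab Nn by (simp add: Me)
    ultimately show ?thesis unfolding Nn sum.lessThan_Suc by simp
  qed
  have Wu: "cmod (W a) = 1" if a: "a<N" for a
  proof -
    have "(\<Sum>i<n. cnj (H$$(i,a)) * H$$(i,a)) = (\<Sum>i<n. 1)"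
      using a Hu unit_cnj' by (intro sum.cong) auto
    then have "of_nat n + cnj (W a) * W a = of_nat N" using clsplit[OF a a] cls[OF a a] by simp
    then have "cnj (W a) * W a = 1" using Nn by simp
    then have "complex_of_real ((cmod (W a))^2) = 1" unfolding complex_norm_square by (simp add: mult.commute)
    then have "(cmod (W a))^2 = 1" by (metis of_real_eq_1_iff)
    then show ?thesis using norm_ge_zero[of "W a"] by (auto simp: power2_eq_1_iff)
  qed
  have Mu: "cmod (M$$(i,j)) = 1" if "i<N" "j<N" for i j
    using that Hu Wu by (simp add: Me)
  have magicM: "magic N N (\<lambda>i j. Proj (vec_div (row M i) (row M j)))"
    by (rule hadamard_magic[OF Mc Npos Mu rws cls])
  have part1: "has_magic_completion N N P"
    unfolding has_magic_completion_def
  proof (intro exI conjI allI impI)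
    show "magic N N (\<lambda>i j. Proj (vec_div (row M i) (row M j)))" by (rule magicM)
    have rM: "row M i = row H i" if "i < N - 1" for i
    proof -
      have i1: "i < n" using that by (simp add: n_def)
      have i: "i < n" "i < N" using i1 Nn by auto
      have dM: "dim_col M = N" using Mc by simp
      show ?thesis unfolding row_def dM Hd(2)
        by (intro eq_vecI) (simp_all add: Me i)
    qed
    fix i j assume "i < N - 1" "j < N - 1"
    then show "Proj (vec_div (row M i) (row M j)) = P i j" unfolding P_def by (simp add: rM)
  qed
  define J where "J = mat N N (\<lambda>_. complex_of_real (1 / real N))"
  have colv: "col H k \<bullet>c col H l = (\<Sum>i<n. H$$(i,k) * cnj (H$$(i,l)))" if "k<N" "l<N" for k l
    using that by (simp add: scalar_prod_def atLeast0LessThan Hd)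
  have cdiag: "col H k \<bullet>c col H k = of_nat n" if k: "k<N" for k
  proof -
    have "(\<Sum>i<n. H$$(i,k) * cnj (H$$(i,k))) = (\<Sum>i<n. 1)"
      using k Hu unit_cnj by (intro sum.cong) auto
    then show ?thesis using colv[OF k k] by simp
  qed
  have coff: "cmod (col H k \<bullet>c col H l) = 1" if kl: "k<N" "l<N" "k \<noteq> l" for k l
  proof -
    have "(\<Sum>i<n. cnj (H$$(i,l)) * H$$(i,k)) + cnj (W l) * W k = 0"
      using clsplit[OF kl(2,1)] cls[OF kl(2,1)] kl(3) by simp
    moreover have "(\<Sum>i<n. cnj (H$$(i,l)) * H$$(i,k)) = col H k \<bullet>c col H l"
      unfolding colv[OF kl(1,2)] by (intro sum.cong) (auto simp: mult.commute)
    ultimately have "col H k \<bullet>c col H l = - (cnj (W l) * W k)" by (simp add: eq_neg_iff_add_eq_0)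
    then show ?thesis using Wu[OF kl(1)] Wu[OF kl(2)] by (simp add: norm_mult)
  qed
  have realid: "(real n)^2 / real N - real (N - 2) = 1 / real N"
  proof -
    have n1: "n \<ge> 1" using assms(1) Nn by simp
    have "real (N - 2) = real n - 1" using n1 Nn by (simp add: of_nat_diff)
    moreover have "real N = real n + 1" using Nn by simp
    ultimately show ?thesis by (simp add: field_simps power2_eq_square)
  qed
  have GJ: "G - of_nat (N - 2) \<cdot>\<^sub>m 1\<^sub>m N = J"
  proof (rule eq_matI)
    fix k l assume "k < dim_row J" "l < dim_col J"
    then have k: "k<N" and l: "l<N" by (auto simp: J_def)
    show "(G - of_nat (N - 2) \<cdot>\<^sub>m 1\<^sub>m N) $$ (k,l) = J $$ (k,l)"
    proof (cases "k = l")
      case True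
      have "(G - of_nat (N - 2) \<cdot>\<^sub>m 1\<^sub>m N) $$ (k,l) = complex_of_real ((real n)^2 / real N) - of_nat (N-2)"
        using k l True by (simp add: G_def cdiag)
      also have "\<dots> = complex_of_real ((real n)^2 / real N - real (N - 2))" by simp
      also have "\<dots> = J $$ (k,l)" unfolding realid using k l by (simp add: J_def)
      finally show ?thesis .
    next
      case False
      then show ?thesis using k l coff[OF k l False] by (simp add: G_def J_def)
    qed
  qed (auto simp: G_def J_def)
  have Jc: "J \<in> carrier_mat N N" unfolding J_def by simp
  have JJ: "J * J = J"
  proof (rule eq_matI)
    fix a b assume "a < dim_row J" "b < dim_col J"
    then have a: "a<N" and b: "b<N" by (auto simp: J_def)
    have "(J * J) $$ (a,b) = (\<Sum>c<N. complex_of_real (1 / real N) * complex_of_real (1 / real N))"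
      unfolding J_def by (rule mat_mult_entry[OF a b])
    also have "\<dots> = complex_of_real (1 / real N)" using Npos by (simp add: field_simps)
    finally show "(J * J) $$ (a,b) = J $$ (a,b)" using a b by (simp add: J_def)
  qed (auto simp: J_def)
  have Jadj: "mat_adjoint J = J"
  proof (rule eq_matI)
    fix a b assume "a < dim_row J" "b < dim_col J"
    then have a: "a<N" and b: "b<N" by (auto simp: J_def)
    show "mat_adjoint J $$ (a,b) = J $$ (a,b)" using adj_index[OF Jc a b] a b by (simp add: J_def)
  qed (auto simp: J_def)
  have part2: "is_projection N (G - of_nat (N - 2) \<cdot>\<^sub>m 1\<^sub>m N)"
    unfolding GJ is_projection_def using Jc JJ Jadj by simp
  have Zsq: "(cmod (Z$a))^2 = S / real N" if a: "a<N" for a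
  proof -
    have "sqrt (real N / S) * cmod (Z$a) = 1" using Wu[OF a] unfolding W_def c0_def
      using Spos by (simp add: norm_mult)
    then have "(sqrt (real N / S) * cmod (Z$a))^2 = 1" by simp
    moreover have "(sqrt (real N / S))^2 = real N / S" using Spos by (intro real_sqrt_pow2) simp
    ultimately have "(real N / S) * (cmod (Z$a))^2 = 1" by (simp only: power_mult_distrib)
    then have h: "(real N / S) * (cmod (Z$a))^2 = 1" .
    have "real N * (cmod (Z$a))^2 = S * ((real N / S) * (cmod (Z$a))^2)" using Spos by simp
    then have e: "real N * (cmod (Z$a))^2 = S" using h by simp
    have "real N > 0" using Npos by simp
    then show ?thesis using e by (simp add: field_simps)
  qed
  have DD: "D = complex_of_real (S / real N) \<cdot>\<^sub>m 1\<^sub>m N"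
    unfolding D_def by (rule eq_matI) (auto simp: Zsq)
  have HH: "H * mat_adjoint H = of_nat N \<cdot>\<^sub>m 1\<^sub>m n"
  proof (rule eq_matI)
    fix j k assume "j < dim_row (of_nat N \<cdot>\<^sub>m 1\<^sub>m n :: complex mat)" "k < dim_col (of_nat N \<cdot>\<^sub>m 1\<^sub>m n :: complex mat)"
    then have j: "j<n" and k: "k<n" by auto
    have "(H * mat_adjoint H) $$ (j,k) = (\<Sum>c<N. H$$(j,c) * cnj (H$$(k,c)))"
      using j k Hc by (simp add: scalar_prod_def atLeast0LessThan adj_index[OF Hc])
    then show "(H * mat_adjoint H) $$ (j,k) = (of_nat N \<cdot>\<^sub>m 1\<^sub>m n) $$ (j,k)"
      using Hr[OF j k] j k by simp
  qed (use Hc in auto)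
  have part3: "\<exists>c::complex. H * D * mat_adjoint H = c \<cdot>\<^sub>m 1\<^sub>m (N - 1)"
  proof (intro exI)
    let ?k = "complex_of_real (S / real N)"
    have "H * D = ?k \<cdot>\<^sub>m H"
      unfolding DD mult_smult_distrib[OF Hc one_carrier_mat] right_mult_one_mat[OF Hc] ..
    then have "H * D * mat_adjoint H = ?k \<cdot>\<^sub>m (H * mat_adjoint H)"
      using mult_smult_assoc_mat[OF Hc adj_carrier[OF Hc]] by simp
    also have "\<dots> = (?k * of_nat N) \<cdot>\<^sub>m 1\<^sub>m (N - 1)" unfolding HH n_def
      by (rule eq_matI) auto
    finally show "H * D * mat_adjoint H = (?k * of_nat N) \<cdot>\<^sub>m 1\<^sub>m (N - 1)" .
  qed
  show ?thesis using part1 part2 part3 by blast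
qed

end
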